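(* Let $G$ be a finite abelian group and $x,y\in G$ with $[x]_{\mathtt{N}}\neq\mathcal{S}$. Then $x\mathtt{N}y$ if and only if $\langle x\rangle=\langle y\rangle$.
   Context: The power graph $\mathcal{P}(G)$ has vertex set $G$, and distinct $x,y$ are adjacent iff one is a positive integer power of the other. $x\mathtt{N}y$ iff $x$ and $y$ have the same closed neighbourhood in $\mathcal{P}(G)$; $[x]_{\mathtt{N}}$ is the class of $x$. $\mathcal{S}=[1]_{\mathtt{N}}$ is the set of vertices adjacent to all others. *)

theory Defs
  imports "HOL-Algebra.Algebra"
begin

definition power_adj :: "('a, 'b) monoid_scheme \<Rightarrow> 'a \<Rightarrow> 'a \<Rightarrow> bool" where
  "power_adj G x y \<longleftrightarrow> x \<in> carrier G \<and> y \<in> carrier G \<and> x \<noteq> y \<and>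
     ((\<exists>n::nat. n > 0 \<and> y = x [^]\<^bsub>G\<^esub> n) \<or> (\<exists>n::nat. n > 0 \<and> x = y [^]\<^bsub>G\<^esub> n))"

definition closed_nbhd :: "('a, 'b) monoid_scheme \<Rightarrow> 'a \<Rightarrow> 'a set" where
  "closed_nbhd G x = insert x {y \<in> carrier G. power_adj G x y}"

definition relN :: "('a, 'b) monoid_scheme \<Rightarrow> 'a \<Rightarrow> 'a \<Rightarrow> bool" where
  "relN G x y \<longleftrightarrow> closed_nbhd G x = closed_nbhd G y"

definition classN :: "('a, 'b) monoid_scheme \<Rightarrow> 'a \<Rightarrow> 'a set" where
  "classN G x = {y \<in> carrier G. relN G x y}"

definition setS :: "('a, 'b) monoid_scheme \<Rightarrow> 'a set" where
  "setS G = classN G \<one>\<^bsub>G\<^esub>"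

end

theory Submission imports Defs begin
definition cyc :: "('a, 'b) monoid_scheme \<Rightarrow> 'a \<Rightarrow> 'a set" where
  "cyc G a = range (\<lambda>k::nat. a [^]\<^bsub>G\<^esub> k)"

locale fcg = comm_group + assumes fin: "finite (carrier G)"
begin

lemma ord_pos: "a \<in> carrier G \<Longrightarrow> ord a > 0"
  using ord_ge_1[OF fin] by fastforce

lemma cyc_mem: "b \<in> cyc G a \<longleftrightarrow> (\<exists>k::nat. b = a [^] k)"
  unfolding cyc_def by auto

lemma cyc_carrier: "a \<in> carrier G \<Longrightarrow> cyc G a \<subseteq> carrier G"
  unfolding cyc_def by auto

lemma cyc_self: "a \<in> carrier G \<Longrightarrow> a \<in> cyc G a"
  unfolding cyc_def by (metis nat_pow_eone rangeI)
  
lemma cyc_one: "\<one> \<in> cyc G a"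
  unfolding cyc_def by (metis nat_pow_0 rangeI)

lemma cyc_gen: "a \<in> carrier G \<Longrightarrow> generate G {a} = cyc G a"
  unfolding cyc_def using generate_pow_on_finite_carrier[OF fin] by auto

lemma cyc_sub: assumes "a \<in> carrier G" "b \<in> cyc G a" shows "cyc G b \<subseteq> cyc G a"
proof
  fix c assume "c \<in> cyc G b"
  then obtain j::nat where "c = b [^] j" by (auto simp: cyc_mem)
  moreover obtain k::nat where "b = a [^] k" using assms by (auto simp: cyc_mem)
  ultimately have "c = a [^] (k * j)" using assms by (simp add: nat_pow_pow)
  then show "c \<in> cyc G a" by (auto simp: cyc_mem)
qed

lemma cyc_finite: "a \<in> carrier G \<Longrightarrow> finite (cyc G a)"
  using cyc_carrier fin finite_subset by blast

lemma cyc_card: "a \<in> carrier G \<Longrightarrow> card (cyc G a) = ord a"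
  using generate_pow_card cyc_gen by simp

lemma cyc_eq: assumes "a \<in> carrier G" "b \<in> cyc G a" "ord b = ord a" shows "cyc G b = cyc G a"
proof -
  have b: "b \<in> carrier G" using assms cyc_carrier by blast
  show ?thesis
    by (metis assms(1,2,3) b card_subset_eq cyc_card cyc_finite cyc_sub)
qed

lemma cyc_pos: assumes "a \<in> carrier G" "b \<in> cyc G a" shows "\<exists>k::nat. k > 0 \<and> b = a [^] k"
proof -
  obtain k::nat where k: "b = a [^] k" using assms by (auto simp: cyc_mem)
  have "a [^] (k + ord a) = b" using assms k by (simp add: nat_pow_mult[symmetric])
  then show ?thesis using ord_pos[OF assms(1)] by (metis add_gr_0)
qed

lemma adj_iff: "power_adj G a b \<longleftrightarrow> a \<in> carrier G \<and> b \<in> carrier G \<and> a \<noteq> b \<and> (b \<in> cyc G a \<or> a \<in> cyc G b)"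
  unfolding power_adj_def using cyc_pos by (auto simp: cyc_mem)

lemma nbhd_eq: "a \<in> carrier G \<Longrightarrow> closed_nbhd G a = {b \<in> carrier G. b \<in> cyc G a \<or> a \<in> cyc G b}"
  unfolding closed_nbhd_def adj_iff using cyc_self by auto

lemma pow_ord_dvd: assumes "a \<in> carrier G" "b \<in> cyc G a" shows "b [^] ord a = \<one>"
proof -
  obtain k::nat where k: "b = a [^] k" using assms by (auto simp: cyc_mem)
  then show ?thesis using assms by (metis mult.commute nat_pow_one nat_pow_pow pow_ord_eq_1)
qed

lemma cyc_char: assumes x: "x \<in> carrier G" and v: "v \<in> cyc G x" and u: "u \<in> cyc G x"
  and uv: "u [^] ord v = \<one>" shows "u \<in> cyc G v"
proof -
  define n m where "n = ord x" and "m = ord v"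
  have vc: "v \<in> carrier G" using x v cyc_carrier by blast
  have n0: "n > 0" using ord_pos x n_def by auto
  have m0: "m > 0" using ord_pos vc m_def by auto
  have mn: "m dvd n" using pow_ord_dvd[OF x v] pow_eq_id[OF vc] n_def m_def by simp
  define s where "s = n div m"
  have nsm: "n = s * m" using mn s_def by simp
  define c where "c = x [^] s"
  have s0: "s \<noteq> 0" using nsm n0 by auto
  have cc: "c \<in> carrier G" using x c_def by simp
  have ordc: "ord c = m" using ord_pow[OF x, of s] nsm s0 n_def c_def m0 by simp
  have S: "g \<in> cyc G c" if g: "g \<in> cyc G x" "g [^] m = \<one>" for g
  proof -
    obtain k::nat where k: "g = x [^] k" using g by (auto simp: cyc_mem)
    have "x [^] (k * m) = \<one>" using g k x by (simp add: nat_pow_pow)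
    then have "n dvd k * m" using pow_eq_id[OF x] n_def by simp
    then have "s dvd k" using nsm m0 by simp
    then obtain i where "k = s * i" by auto
    then have "g = c [^] i" using k c_def x by (simp add: nat_pow_pow)
    then show ?thesis by (auto simp: cyc_mem)
  qed
  have "v \<in> cyc G c" using S[OF v] m_def vc by simp
  then have "cyc G v = cyc G c" using cyc_eq[OF cc] ordc m_def by simp
  moreover have "u \<in> cyc G c" using S[OF u] uv m_def by simp
  ultimately show ?thesis by simp
qed

end
lemma nt: fixes n d :: nat
  assumes n0: "n > 0" and dn: "d dvd n" and d1: "1 < d" and dlt: "d < n"
    and E: "\<forall>e. e dvd n \<longrightarrow> e dvd d \<or> d dvd e"
  shows "\<exists>p. Factorial_Ring.prime p \<and> p * d dvd n \<and> (\<forall>q. Factorial_Ring.prime q \<longrightarrow> q dvd n \<longrightarrow> q = p)"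
proof -
  obtain c where c: "n = d * c" using dn by auto
  have "c \<noteq> 1" using c dlt by auto
  then obtain p where p: "Factorial_Ring.prime p" "p dvd c" using prime_factor_nat by blast
  have pd: "p * d dvd n" using c p by (simp add: mult.commute mult_dvd_mono)
  have "q = p" if q: "Factorial_Ring.prime q" "q dvd n" for q
  proof (rule ccontr)
    assume qp: "q \<noteq> p"
    show False
    proof (cases "q dvd d")
      case True
      then obtain d' where d': "d = q * d'" by auto
      define e where "e = d' * p"
      have "e dvd n" using pd d' e_def by (metis dvd_mult_left mult.assoc mult.commute)
      then have "e dvd d \<or> d dvd e" using E by blast
      moreover have "d' > 0" using d' d1 by (cases "d' = 0") auto
      ultimately have "p dvd q \<or> q dvd p" using d' e_def by (auto simp: mult.commute)
      then show False using q p qp by (metis prime_nat_iff primes_dvd_imp_eq)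
    next
      case False
      then have "d dvd q" using E q by blast
      then have "d = 1 \<or> d = q" using q(1) by (simp add: prime_nat_iff)
      then have "d = q" using d1 by auto
      then show False using False by simp
    qed
  qed
  then show ?thesis using p pd by blast
qed

lemma copr: fixes n k p :: nat
  assumes "\<forall>q. Factorial_Ring.prime q \<longrightarrow> q dvd n \<longrightarrow> q = p" "\<not> p dvd k"
  shows "coprime k n"
proof (rule ccontr)
  assume "\<not> coprime k n"
  then obtain q where "Factorial_Ring.prime q" "q dvd k" "q dvd n"
  proof -
    have "gcd k n \<noteq> 1" using \<open>\<not> coprime k n\<close> by (simp add: coprime_iff_gcd_eq_1)
    then obtain q where "Factorial_Ring.prime q" "q dvd gcd k n" using prime_factor_nat by blast
    then show ?thesis using that by auto
  qed
  then show False using assms by blast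
qed

lemma dds: "(e::nat) dvd n \<Longrightarrow> n > 0 \<Longrightarrow> n div (n div e) = e"
  by (auto elim!: dvdE)

context fcg begin

lemma cyc_mult: assumes "a \<in> cyc G x" "b \<in> cyc G x" "x \<in> carrier G" shows "a \<otimes> b \<in> cyc G x"
proof -
  obtain i j :: nat where "a = x [^] i" "b = x [^] j" using assms by (auto simp: cyc_mem)
  then have "a \<otimes> b = x [^] (i + j)" using assms by (simp add: nat_pow_mult)
  then show ?thesis by (auto simp: cyc_mem)
qed

lemma key:
  assumes x: "x \<in> carrier G" and y: "y \<in> cyc G x" and ne: "cyc G y \<noteq> cyc G x"
    and N: "closed_nbhd G x = closed_nbhd G y"
    and w: "w \<in> carrier G" "w \<notin> closed_nbhd G x"
  shows False
proof -
  have yc: "y \<in> carrier G" using x y cyc_carrier by blast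
  have sub: "cyc G y \<subseteq> cyc G x" using cyc_sub x y by blast
  have Nx: "closed_nbhd G x = {b \<in> carrier G. b \<in> cyc G x \<or> x \<in> cyc G b}" using nbhd_eq x by blast
  have Ny: "closed_nbhd G y = {b \<in> carrier G. b \<in> cyc G y \<or> y \<in> cyc G b}" using nbhd_eq yc by blast
  have y1: "y \<noteq> \<one>"
  proof
    assume "y = \<one>"
    then have "w \<in> closed_nbhd G y" using Ny w cyc_one by auto
    then show False using N w by simp
  qed
  have A: "z \<in> cyc G y \<or> y \<in> cyc G z" if "z \<in> cyc G x" for z
  proof -
    have "z \<in> closed_nbhd G x" using Nx that x cyc_carrier by blast
    then show ?thesis using N Ny by auto
  qed
  have B: "z \<in> cyc G x \<or> x \<in> cyc G z" if "z \<in> carrier G" "y \<in> cyc G z" for z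
  proof -
    have "z \<in> closed_nbhd G y" using Ny that by blast
    then show ?thesis using N Nx by auto
  qed
  define n d where "n = ord x" and "d = ord y"
  have n0: "n > 0" using ord_pos x n_def by auto
  have d0: "d > 0" using ord_pos yc d_def by auto
  have dn: "d dvd n" using pow_ord_dvd[OF x y] pow_eq_id[OF yc] n_def d_def by simp
  have d1: "d \<noteq> 1" using ord_eq_1[OF yc] y1 d_def by simp
  have dnn: "d \<noteq> n" using cyc_eq[OF x y] ne n_def d_def by auto
  have dlt: "d < n" using dn dnn n0 dvd_imp_le by fastforce
  have E: "\<forall>e. e dvd n \<longrightarrow> e dvd d \<or> d dvd e"
  proof (intro allI impI)
    fix e assume e: "e dvd n"
    define z where "z = x [^] (n div e)"
    have e0: "e > 0" using e n0 by (cases "e = 0") auto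
    have zx: "z \<in> cyc G x" using z_def by (auto simp: cyc_mem)
    have zc: "z \<in> carrier G" using z_def x by simp
    have "n div e dvd n" using e by auto
    moreover have "n div e \<noteq> 0" using e n0 by (auto elim!: dvdE)
    ultimately have oz: "ord z = e" using ord_pow[OF x, of "n div e"] z_def n_def dds[OF e n0] by simp
    from A[OF zx] show "e dvd d \<or> d dvd e"
    proof
      assume "z \<in> cyc G y"
      then have "z [^] d = \<one>" using pow_ord_dvd yc d_def by blast
      then show ?thesis using pow_eq_id[OF zc] oz by simp
    next
      assume "y \<in> cyc G z"
      then have "y [^] e = \<one>" using pow_ord_dvd zc oz by blast
      then show ?thesis using pow_eq_id[OF yc] d_def by simp
    qed
  qed
  obtain p where p: "Factorial_Ring.prime p" "p * d dvd n"
    and pall: "\<forall>q. Factorial_Ring.prime q \<longrightarrow> q dvd n \<longrightarrow> q = p"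
    using nt[OF n0 dn _ dlt E] d1 d0 by force
  have p0: "p > 0" using p(1) prime_gt_0_nat by blast
  obtain j::nat where j: "y = x [^] j" using y by (auto simp: cyc_mem)
  have j0: "j \<noteq> 0" using j y1 by (cases "j = 0") auto
  have "d = n div gcd n j" using ord_pow_gen[OF x, of j] j0 j n_def d_def by (simp add: gcd.commute)
  then have "gcd n j = n div d" using n0 dds[of "gcd n j" n] by simp
  moreover have "p dvd n div d"
  proof -
    obtain k where "n = p * d * k" using p(2) by (auto elim!: dvdE)
    then have "n div d = p * k" using d0 by simp
    then show ?thesis by simp
  qed
  ultimately have "p dvd j" by (metis dvd_trans gcd_dvd2)
  then obtain j' where j': "j = p * j'" by auto
  define x' where "x' = x [^] j'"
  have x'c: "x' \<in> carrier G" using x'_def x by simp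
  have x'x: "x' \<in> cyc G x" using x'_def by (auto simp: cyc_mem)
  have x'p: "x' [^] p = y" using x'_def j j' x by (simp add: nat_pow_pow mult.commute)
  show False
  proof (cases "\<exists>g\<in>carrier G. \<exists>r. Factorial_Ring.prime r \<and> r dvd ord g \<and> r \<noteq> p")
    case True
    then obtain g r where g: "g \<in> carrier G" and r: "Factorial_Ring.prime r" "r dvd ord g" "r \<noteq> p" by blast
    define u where "u = g [^] (ord g div r)"
    have uc: "u \<in> carrier G" using u_def g by simp
    have r0: "r > 0" using r(1) prime_gt_0_nat by blast
    have "ord g div r dvd ord g" "ord g div r \<noteq> 0" using r(2) ord_pos[OF g] by (auto elim!: dvdE)
    then have ou: "ord u = r" using ord_pow[OF g, of "ord g div r"] u_def dds[OF r(2) ord_pos[OF g]] by simp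
    have rn: "\<not> r dvd n" using pall r by blast
    have rd: "\<not> r dvd d" using rn dn dvd_trans by blast
    have cop_rd: "coprime r d" using r(1) rd by (simp add: prime_imp_coprime)
    have cop_rn: "coprime r n" using r(1) rn by (simp add: prime_imp_coprime)
    define z where "z = y \<otimes> u"
    have zc: "z \<in> carrier G" using z_def yc uc by simp
    have ur: "u [^] r = \<one>" using pow_ord_eq_1[OF uc] ou by simp
    have zr: "z [^] r = y [^] r" using z_def yc uc ur by (simp add: nat_pow_distrib)
    have "ord (y [^] r) = d" using pow_ord_eq_ord_iff[OF fin yc, of r] cop_rd d_def by simp
    then have "cyc G (y [^] r) = cyc G y" using cyc_eq[OF yc, of "y [^] r"] d_def by (auto simp: cyc_mem)
    moreover have "cyc G (z [^] r) \<subseteq> cyc G z" using cyc_sub[OF zc] by (auto simp: cyc_mem)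
    ultimately have yz: "y \<in> cyc G z" using zr cyc_self[OF yc] by auto
    from B[OF zc yz] show False
    proof
      assume "z \<in> cyc G x"
      then have "z [^] n = \<one>" using pow_ord_dvd x n_def by blast
      moreover have "y [^] n = \<one>" using pow_ord_dvd x y n_def by blast
      ultimately have "u [^] n = \<one>" using z_def yc uc by (simp add: nat_pow_distrib)
      then have "r dvd n" using pow_eq_id[OF uc] ou by simp
      then show False using rn by simp
    next
      assume "x \<in> cyc G z"
      then obtain m::nat where m: "x = z [^] m" by (auto simp: cyc_mem)
      have "x [^] r = (z [^] r) [^] m" using m zc by (simp add: nat_pow_pow mult.commute)
      also have "\<dots> = (y [^] r) [^] m" using zr by simp
      finally have xry: "x [^] r \<in> cyc G y" using yc by (auto simp: cyc_mem nat_pow_pow)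
      have "ord (x [^] r) = n" using pow_ord_eq_ord_iff[OF fin x, of r] cop_rn n_def by simp
      then have "cyc G (x [^] r) = cyc G x" using cyc_eq[OF x, of "x [^] r"] n_def by (auto simp: cyc_mem)
      then have "cyc G x \<subseteq> cyc G y" using cyc_sub[OF yc xry] by simp
      then show False using sub ne by simp
    qed
  next
    case False
    then have pel: "\<And>g q. g \<in> carrier G \<Longrightarrow> Factorial_Ring.prime q \<Longrightarrow> q dvd ord g \<Longrightarrow> q = p" by blast
    have "\<exists>t\<in>carrier G. t [^] p = \<one> \<and> t \<notin> cyc G x"
    proof (rule ccontr)
      assume "\<not> ?thesis"
      then have H: "\<And>t. t \<in> carrier G \<Longrightarrow> t [^] p = \<one> \<Longrightarrow> t \<in> cyc G x" by blast
      have "v \<in> cyc G x \<or> x \<in> cyc G v" if "v \<in> carrier G" for v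
        using that
      proof (induct "ord v" arbitrary: v rule: less_induct)
        case less
        show ?case
        proof (cases "ord v = 1")
          case True
          then show ?thesis using ord_eq_1 less cyc_one by auto
        next
          case False
          then obtain q where q: "Factorial_Ring.prime q" "q dvd ord v" using prime_factor_nat by blast
          have qp: "q = p" using pel[OF less(2) q] .
          have vc: "v \<in> carrier G" using less by simp
          have ordvp: "ord (v [^] p) = ord v div p" using ord_pow[OF vc, of p] q qp p0 by simp
          have "ord v div p < ord v" using ord_pos[OF vc] p(1) prime_gt_1_nat by (simp add: div_less_dividend)
          then have IH: "v [^] p \<in> cyc G x \<or> x \<in> cyc G (v [^] p)"
            using less(1) ordvp vc by simp
          have vpv: "cyc G (v [^] p) \<subseteq> cyc G v" using cyc_sub[OF vc] by (auto simp: cyc_mem)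
          from IH show ?thesis
          proof
            assume "x \<in> cyc G (v [^] p)"
            then show ?thesis using vpv by auto
          next
            assume "v [^] p \<in> cyc G x"
            then obtain k::nat where k: "v [^] p = x [^] k" by (auto simp: cyc_mem)
            show ?thesis
            proof (cases "p dvd k")
              case True
              then obtain k' where k': "k = p * k'" by auto
              define t where "t = v \<otimes> inv (x [^] k')"
              have tc: "t \<in> carrier G" using t_def vc x by simp
              have "t [^] p = v [^] p \<otimes> inv ((x [^] k') [^] p)"
                using t_def vc x by (simp add: nat_pow_distrib nat_pow_inv)
              also have "\<dots> = \<one>" using k k' x by (simp add: nat_pow_pow mult.commute)
              finally have "t \<in> cyc G x" using H tc by blast
              moreover have "x [^] k' \<in> cyc G x" by (auto simp: cyc_mem)
              ultimately have "t \<otimes> x [^] k' \<in> cyc G x" using cyc_mult x by blast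
              moreover have "t \<otimes> x [^] k' = v" using t_def vc x by (simp add: m_assoc)
              ultimately show ?thesis by simp
            next
              case False
              have "coprime k n" using copr[OF pall False] .
              then have "ord (x [^] k) = n" using pow_ord_eq_ord_iff[OF fin x, of k] n_def by simp
              then have "cyc G (x [^] k) = cyc G x" using cyc_eq[OF x, of "x [^] k"] n_def by (auto simp: cyc_mem)
              then have "x \<in> cyc G (v [^] p)" using k cyc_self[OF x] by simp
              then show ?thesis using vpv by auto
            qed
          qed
        qed
      qed
      then show False using w Nx by auto
    qed
    then obtain t where tc: "t \<in> carrier G" and tp: "t [^] p = \<one>" and tx: "t \<notin> cyc G x" by blast
    define z where "z = x' \<otimes> t"
    have zc: "z \<in> carrier G" using z_def x'c tc by simp
    have zp: "z [^] p = y" using z_def x'c tc tp x'p yc by (simp add: nat_pow_distrib)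
    have yz: "y \<in> cyc G z" using zp by (auto simp: cyc_mem)
    have zx: "z \<notin> cyc G x"
    proof
      assume zx: "z \<in> cyc G x"
      define a where "a = inv x'"
      have "a \<in> cyc G x"
      proof -
        obtain i::nat where i: "x' = x [^] i" using x'x by (auto simp: cyc_mem)
        have "inv x' = x [^] (i * (n - 1))"
        proof -
          have "x' \<otimes> x [^] (i * (n - 1)) = x [^] (i * (1 + (n - 1)))"
            using i x by (simp add: nat_pow_mult distrib_left)
          also have "\<dots> = \<one>" using n0 x n_def by (simp add: mult.commute[of i] nat_pow_pow[symmetric])
          finally show ?thesis using x'c x by (simp add: inv_char m_comm)
        qed
        then show ?thesis using a_def by (auto simp: cyc_mem)
      qed
      then have "a \<otimes> z \<in> cyc G x" using cyc_mult zx x by blast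
      moreover have "a \<otimes> z = t" using a_def z_def x'c tc by (simp add: m_assoc[symmetric])
      ultimately show False using tx by simp
    qed
    have "x \<in> cyc G z" using B[OF zc yz] zx by simp
    then have xz: "cyc G x \<subseteq> cyc G z" using cyc_sub[OF zc] by simp
    have "z [^] (p * d) = \<one>" using zp yc d_def zc by (simp add: nat_pow_pow[symmetric])
    then have "ord z dvd p * d" using pow_eq_id[OF zc] by simp
    then have "ord z \<le> n" using p(2) n0 by (meson dvd_imp_le dvd_trans)
    then have "card (cyc G z) \<le> card (cyc G x)" using cyc_card zc x n_def by simp
    moreover have "card (cyc G x) \<le> card (cyc G z)" using card_mono[OF cyc_finite[OF zc] xz] .
    ultimately have "cyc G x = cyc G z" using card_subset_eq[OF cyc_finite[OF zc] xz] by simp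
    then show False using zx cyc_self[OF zc] by simp
  qed
qed

end
theorem mainTheorem16:
  fixes G (structure) and x y :: 'a
  assumes "comm_group G" and "finite (carrier G)"
    and "x \<in> carrier G" and "y \<in> carrier G"
    and "classN G x \<noteq> setS G"
  shows "relN G x y \<longleftrightarrow> generate G {x} = generate G {y}"
proof -
  interpret fcg G using assms(1,2) by (simp add: fcg_def fcg_axioms_def)
  have x: "x \<in> carrier G" and y: "y \<in> carrier G" using assms by auto
  have N1: "closed_nbhd G \<one> = carrier G" using nbhd_eq[of \<one>] cyc_one by auto
  have Nx: "closed_nbhd G x \<noteq> carrier G"
  proof
    assume "closed_nbhd G x = carrier G"
    then have "classN G x = classN G \<one>" using N1 unfolding classN_def relN_def by simp
    then show False using assms(5) unfolding setS_def by simp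
  qed
  have "closed_nbhd G x \<subseteq> carrier G" unfolding closed_nbhd_def using x by auto
  then obtain w where w: "w \<in> carrier G" "w \<notin> closed_nbhd G x" using Nx by blast
  have eq: "closed_nbhd G x = closed_nbhd G y \<longleftrightarrow> cyc G x = cyc G y"
  proof
    assume N: "closed_nbhd G x = closed_nbhd G y"
    show "cyc G x = cyc G y"
    proof (rule ccontr)
      assume ne: "cyc G x \<noteq> cyc G y"
      have "y \<in> closed_nbhd G x" using N unfolding closed_nbhd_def by simp
      then have "y \<in> cyc G x \<or> x \<in> cyc G y" using nbhd_eq[OF x] by simp
      then show False
      proof
        assume "y \<in> cyc G x"
        then show False using key[OF x _ _ N w] ne by auto
      next
        assume "x \<in> cyc G y"
        then show False using key[OF y _ _ N[symmetric]] ne w N by auto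
      qed
    qed
  next
    assume C: "cyc G x = cyc G y"
    have "x \<in> cyc G b \<longleftrightarrow> y \<in> cyc G b" if "b \<in> carrier G" for b
      using C cyc_self[OF x] cyc_self[OF y] cyc_sub[OF that] by blast
    then show "closed_nbhd G x = closed_nbhd G y" using nbhd_eq[OF x] nbhd_eq[OF y] C by auto
  qed
  show ?thesis unfolding relN_def using eq cyc_gen[OF x] cyc_gen[OF y] by simp
qed

end
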